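(* For every integer $m\ge1$, the Riemann zeta function satisfies $$\zeta(2m+2)=\sum_{n=1}^{m}\sum_{k=1}^{\lfloor (n+1)/2\rfloor}\frac{\sqrt{4\pi}\,(-1)^{k-1}\pi^{2k}\,\Gamma(2n-2k+2)\,\zeta(2m+2-2k)}{4^{\,n-k+2}\,\Gamma\!\left(n+\tfrac52\right)\Gamma(2k)\,\Gamma(n+2-2k)}.$$ Moreover, for each fixed $n$ with $1\le n\le m$, the inner sum over $k$ is positive. *)

theory Defs
  imports "HOL-Analysis.Analysis"
begin

text \<open>Riemann zeta function on the real half-line s > 1, given by its defining Dirichlet
series. Only used at integer arguments at least 2 in the statement.\<close>
definition zeta :: "real \<Rightarrow> real" where
  "zeta s = (\<Sum>n. 1 / (real (Suc n)) powr s)"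

end

theory Submission
  imports Defs
begin


lemma powser_unique_zero:
  fixes a :: "nat \<Rightarrow> real"
  assumes r: "r > 0" and h: "\<And>t. 0 < t \<Longrightarrow> t < r \<Longrightarrow> (\<lambda>n. a n * t^n) sums 0"
  shows "a n = 0"
proof (induction n rule: less_induct)
  case (less n)
  define b where "b k = a (k + n)" for k
  have bs: "(\<lambda>k. b k * t^k) sums 0" if t: "0 < t" "t < r" for t
  proof -
    have "(\<lambda>k. a (k + n) * t^(k + n)) sums (0 - (\<Sum>i<n. a i * t^i))"
      using sums_split_initial_segment[OF h[OF t], of n] by simp
    also have "(\<Sum>i<n. a i * t^i) = 0" using less by simp
    finally have "(\<lambda>k. a (k + n) * t^(k + n) / t^n) sums (0 / t^n)"
      by (intro sums_divide) simp
    moreover have "(\<lambda>k. a (k + n) * t^(k + n) / t^n) = (\<lambda>k. b k * t^k)"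
      using t by (auto simp: b_def power_add)
    ultimately show ?thesis by simp
  qed
  have summ: "summable (\<lambda>k. b k * (r/2)^k)"
    using bs[of "r/2"] r by (auto simp: sums_iff)
  have "isCont (\<lambda>x. \<Sum>k. b k * x^k) 0"
    by (rule isCont_powser[OF summ]) (use r in simp)
  hence "((\<lambda>x. \<Sum>k. b k * x^k) \<longlongrightarrow> (\<Sum>k. b k * 0^k)) (at_right 0)"
    by (simp add: isCont_def filterlim_at_split)
  hence lim1: "((\<lambda>x. \<Sum>k. b k * x^k) \<longlongrightarrow> a n) (at_right 0)"
    by (simp add: powser_zero b_def)
  have ev: "eventually (\<lambda>x. (\<Sum>k. b k * x^k) = 0) (at_right (0::real))"
    unfolding eventually_at_right_field
    by (rule exI[of _ r]) (use r bs in \<open>auto simp: sums_iff\<close>)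
  have "((\<lambda>x. \<Sum>k. b k * x^k) \<longlongrightarrow> 0) (at_right (0::real))"
    by (rule Lim_transform_eventually[OF tendsto_const]) (use ev in \<open>auto elim: eventually_mono\<close>)
  from tendsto_unique[OF _ lim1 this] show ?case by simp
qed


definition pc :: "nat \<Rightarrow> real" where "pc k = (-1)^k * pi^(2*k) / fact (2*k+1)"
definition Phi :: "real \<Rightarrow> real" where "Phi t = (\<Sum>k. pc k * t^k)"

lemma pc_sums:
  assumes "t > 0"
  shows "(\<lambda>k. pc k * t^k) sums (sin (pi * sqrt t) / (pi * sqrt t))"
proof -
  let ?z = "pi * sqrt t"
  have z: "?z \<noteq> 0" using assms by simp
  have "(\<lambda>n. ((-1)^n / fact (2*n+1)) *\<^sub>R ?z^(2*n+1) / ?z) sums (sin ?z / ?z)"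
    by (rule sums_divide[OF sin_series])
  moreover have "((-1)^n / fact (2*n+1)) *\<^sub>R ?z^(2*n+1) / ?z = pc n * t^n" for n
  proof -
    have "?z^(2*n+1) / ?z = ?z^(2*n)" using z by (simp add: power_add)
    also have "\<dots> = (?z^2)^n" by (simp add: power_mult)
    also have "?z^2 = pi^2 * t" using assms by (simp add: power_mult_distrib)
    finally have e: "?z^(2*n+1) / ?z = pi^(2*n) * t^n" by (simp add: power_mult_distrib power_mult)
    have "((-1)^n / fact (2*n+1)) *\<^sub>R ?z^(2*n+1) / ?z = ((-1)^n / fact (2*n+1)) * (?z^(2*n+1) / ?z)"
      by simp
    also have "\<dots> = pc n * t^n" unfolding e pc_def by simp
    finally show ?thesis .
  qed
  ultimately show ?thesis by simp
qed

lemma pc_summable: "summable (\<lambda>k. pc k * x^k)"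
proof -
  have "summable (\<lambda>k. pc k * (norm x + 1)^k)"
    using pc_sums[of "norm x + 1"] by (auto simp: sums_iff)
  from powser_insidea[OF this, of x] have "summable (\<lambda>k. norm (pc k * x^k))" by simp
  thus ?thesis by (rule summable_norm_cancel)
qed

lemma Phi_eq: "t > 0 \<Longrightarrow> Phi t = sin (pi * sqrt t) / (pi * sqrt t)"
  using pc_sums by (simp add: Phi_def sums_iff)

lemma Phi_pos: assumes "0 < t" "t < 1" shows "Phi t > 0"
proof -
  have "sqrt t < 1" using assms by simp
  hence "pi * sqrt t < pi" using pi_gt_zero by simp
  hence "sin (pi * sqrt t) > 0" using assms by (intro sin_gt_zero) auto
  thus ?thesis using assms by (simp add: Phi_eq)
qed

lemma Phi_deriv: "DERIV Phi t :> (\<Sum>k. diffs pc k * t^k)"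
  unfolding Phi_def by (rule termdiffs_strong_converges_everywhere[OF pc_summable])

lemma diffs_pc_summable: "summable (\<lambda>k. diffs pc k * t^k)"
  by (rule termdiff_converges_all[OF pc_summable])

definition lc :: "nat \<Rightarrow> real" where "lc n = zeta (real (2*n)) / real n"

lemma zeta_sums:
  assumes "n \<ge> 2"
  shows "(\<lambda>k. 1 / real (Suc k) ^ n) sums zeta (real n)"
proof -
  have "summable (\<lambda>k. inverse (real k ^ n))"
    by (rule inverse_power_summable) (use assms in auto)
  hence "summable (\<lambda>k. inverse (real (Suc k) ^ n))"
    by (subst summable_Suc_iff) simp
  hence "(\<lambda>k. 1 / real (Suc k) ^ n) sums (\<Sum>k. 1 / real (Suc k) ^ n)"
    by (simp add: summable_sums divide_inverse)
  moreover have "(\<Sum>k. 1 / real (Suc k) ^ n) = zeta (real n)"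
    unfolding zeta_def by (intro suminf_cong) (simp add: powr_realpow)
  ultimately show ?thesis by simp
qed

lemma log_sums:
  assumes t: "0 < t" "t < 1"
  shows "(\<lambda>k. ln (1 - t / real (Suc k)^2)) sums ln (Phi t)"
proof -
  have pos: "1 - t / real (Suc k)^2 > 0" for k
  proof -
    have "t < real (Suc k)^2" using t by (smt (verit) of_nat_0_le_iff one_le_power of_nat_Suc)
    thus ?thesis by (simp add: field_simps)
  qed
  have "(\<lambda>n. \<Prod>k=1..n. 1 - (sqrt t)\<^sup>2 / (real k)\<^sup>2) \<longlonglongrightarrow> sin (pi * sqrt t) / (pi * sqrt t)"
    by (rule sin_product_formula_real') (use t in simp)
  hence "(\<lambda>n. \<Prod>k=1..n. 1 - t / (real k)\<^sup>2) \<longlonglongrightarrow> Phi t"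
    using t by (simp add: Phi_eq)
  hence "(\<lambda>n. ln (\<Prod>k=1..n. 1 - t / (real k)\<^sup>2)) \<longlonglongrightarrow> ln (Phi t)"
    by (rule tendsto_ln) (use Phi_pos[OF t] in simp)
  moreover have "ln (\<Prod>k=1..n. 1 - t / (real k)\<^sup>2) = (\<Sum>k<n. ln (1 - t / real (Suc k)^2))" for n
  proof -
    have "(\<Prod>k=1..n. 1 - t / (real k)\<^sup>2) = (\<Prod>k<n. 1 - t / (real (Suc k))\<^sup>2)"
      by (simp add: prod.atLeast1_atMost_eq)
    also have "ln \<dots> = (\<Sum>k<n. ln (1 - t / real (Suc k)^2))"
      by (rule ln_prod) (use pos in \<open>auto simp del: of_nat_Suc\<close>)
    finally show ?thesis .
  qed
  ultimately show ?thesis by (simp add: sums_def)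
qed

lemma inner_sums:
  assumes t: "0 < t" "t < 1"
  shows "(\<lambda>n. t^n / (real n * real (Suc k)^(2*n))) sums (- ln (1 - t / real (Suc k)^2))"
proof -
  have x: "\<bar>- (t / real (Suc k)^2)\<bar> < 1"
  proof -
    have "t < real (Suc k)^2" using t by (smt (verit) of_nat_0_le_iff one_le_power of_nat_Suc)
    thus ?thesis using t by (simp add: field_simps)
  qed
  from sums_minus[OF ln_series'[OF x]]
  have "(\<lambda>n. - (- ((- (- (t / real (Suc k)^2))) ^ n) / real n)) sums - ln (1 + - (t / real (Suc k)^2))" .
  moreover have "- (- ((- (- (t / real (Suc k)^2))) ^ n) / real n) = t^n / (real n * real (Suc k)^(2*n))" for n
    by (simp add: power_divide power_mult)
  ultimately show ?thesis by simp
qed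

lemma L_sums:
  assumes t: "0 < t" "t < 1"
  shows "(\<lambda>n. lc n * t^n) sums (- ln (Phi t))"
proof -
  define f where "f = (\<lambda>(k::nat, n::nat). t^n / (real n * real (Suc k)^(2*n)))"
  have fnn: "f x \<ge> 0" for x using t by (cases x) (auto simp: f_def)
  have hk: "((\<lambda>n. f (k, n)) has_sum (- ln (1 - t / real (Suc k)^2))) UNIV" for k
    by (rule sums_nonneg_imp_has_sum) (use inner_sums[OF t, of k] fnn in \<open>auto simp: f_def\<close>)
  have gnn: "- ln (1 - t / real (Suc k)^2) \<ge> 0" for k
    using has_sum_nonneg[OF hk[of k]] fnn by auto
  have hg: "((\<lambda>k. - ln (1 - t / real (Suc k)^2)) has_sum (- ln (Phi t))) UNIV"
    by (rule sums_nonneg_imp_has_sum) (use sums_minus[OF log_sums[OF t]] gnn in auto)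
  have sf: "f summable_on Sigma UNIV (\<lambda>_. UNIV)"
    by (rule summable_on_SigmaI[OF hk]) (use hg fnn in \<open>auto dest: has_sum_imp_summable\<close>)
  have hf: "(f has_sum (- ln (Phi t))) (Sigma UNIV (\<lambda>_. UNIV))"
    by (rule has_sum_SigmaI[OF hk hg sf])
  hence hf': "((\<lambda>(x,y). f (y,x)) has_sum (- ln (Phi t))) (UNIV \<times> UNIV)"
    using has_sum_swap[THEN iffD1, OF hf] by simp
  have hn: "((\<lambda>k. (\<lambda>(x,y). f (y,x)) (n, k)) has_sum (lc n * t^n)) UNIV" for n
  proof (cases "n = 0")
    case True
    thus ?thesis by (simp add: f_def lc_def)
  next
    case False
    have "(\<lambda>k. t^n / real n * (1 / real (Suc k) ^ (2*n))) sums (t^n / real n * zeta (real (2*n)))"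
      by (rule sums_mult[OF zeta_sums]) (use False in auto)
    hence "((\<lambda>k. t^n / real n * (1 / real (Suc k) ^ (2*n))) has_sum (t^n / real n * zeta (real (2*n)))) UNIV"
      by (rule sums_nonneg_imp_has_sum) (use t in auto)
    thus ?thesis by (simp add: f_def lc_def mult_ac)
  qed
  have "((\<lambda>n. lc n * t^n) has_sum (- ln (Phi t))) UNIV"
    by (rule has_sum_SigmaD[OF _ hn]) (use hf' in simp)
  thus ?thesis by (rule has_sum_imp_sums)
qed


lemma lc_summable:
  assumes "\<bar>x\<bar> < 1"
  shows "summable (\<lambda>n. lc n * x^n)"
proof -
  define y where "y = (1 + \<bar>x\<bar>) / 2"
  have y: "0 < y" "y < 1" "norm x < norm y" using assms by (auto simp: y_def)
  have "summable (\<lambda>n. lc n * y^n)" using L_sums[OF y(1,2)] by (simp add: sums_iff)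
  from powser_insidea[OF this y(3)] show ?thesis by (rule summable_norm_cancel)
qed

lemma diffs_lc: "diffs lc n = zeta (real (2 * Suc n))"
  by (simp add: diffs_def lc_def del: of_nat_Suc)

lemma Euler_aux:
  assumes t: "0 < t" "t < 1"
  shows "(\<lambda>k. ((\<Sum>i\<le>k. zeta (real (2 * Suc i)) * pc (k - i)) + diffs pc k) * t^k) sums 0"
proof -
  define K where "K = (1 + t) / 2"
  have K: "0 < K" "K < 1" "norm t < norm K" using t by (auto simp: K_def)
  have sK: "summable (\<lambda>n. lc n * K^n)" using L_sums[OF K(1,2)] by (simp add: sums_iff)
  have DL: "DERIV (\<lambda>x. \<Sum>n. lc n * x^n) t :> (\<Sum>n. diffs lc n * t^n)"
    by (rule termdiffs_strong[OF sK K(3)])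
  have DP: "DERIV (\<lambda>x. ln (Phi x)) t :> (1 / Phi t) * (\<Sum>k. diffs pc k * t^k)"
    by (rule DERIV_chain2[OF DERIV_ln_divide[OF Phi_pos[OF t]] Phi_deriv])
  define D where "D = (\<Sum>n. diffs lc n * t^n) + (1 / Phi t) * (\<Sum>k. diffs pc k * t^k)"
  have DH: "DERIV (\<lambda>x. (\<Sum>n. lc n * x^n) + ln (Phi x)) t :> D"
    unfolding D_def by (rule DERIV_add[OF DL DP])
  have "DERIV (\<lambda>x. 0) t :> D"
  proof (rule has_field_derivative_transform_within_open[OF DH, of "{0<..<1}"])
    fix x :: real assume "x \<in> {0<..<1}"
    hence "(\<Sum>n. lc n * x^n) = - ln (Phi x)" using L_sums by (auto simp: sums_iff)
    thus "(\<Sum>n. lc n * x^n) + ln (Phi x) = 0" by simp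
  qed (use t in auto)
  hence D0: "D = 0" using DERIV_const DERIV_unique by blast
  have sdl: "summable (\<lambda>n. diffs lc n * K^n)"
    by (rule termdiff_converges[of _ 1]) (use K lc_summable in auto)
  have a_abs: "summable (\<lambda>n. norm (diffs lc n * t^n))"
    by (rule powser_insidea[OF sdl K(3)])
  have b_abs: "summable (\<lambda>n. norm (pc n * t^n))"
    by (rule powser_insidea[OF pc_summable[of 2]]) (use t in auto)
  from Cauchy_product_sums[OF a_abs b_abs]
  have c: "(\<lambda>k. \<Sum>i\<le>k. diffs lc i * t^i * (pc (k - i) * t^(k - i))) sums
             ((\<Sum>n. diffs lc n * t^n) * (\<Sum>n. pc n * t^n))" .
  have "(\<lambda>k. (\<Sum>i\<le>k. diffs lc i * t^i * (pc (k - i) * t^(k - i))) + diffs pc k * t^k) sums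
         ((\<Sum>n. diffs lc n * t^n) * (\<Sum>n. pc n * t^n) + (\<Sum>k. diffs pc k * t^k))"
    by (rule sums_add[OF c summable_sums[OF diffs_pc_summable]])
  also have "(\<Sum>n. diffs lc n * t^n) * (\<Sum>n. pc n * t^n) + (\<Sum>k. diffs pc k * t^k) = Phi t * D"
    using Phi_pos[OF t] by (simp add: D_def Phi_def field_simps)
  also have "\<dots> = 0" by (simp add: D0)
  finally have *: "(\<lambda>k. (\<Sum>i\<le>k. diffs lc i * t^i * (pc (k - i) * t^(k - i))) + diffs pc k * t^k) sums 0" .
  have "(\<Sum>i\<le>k. diffs lc i * t^i * (pc (k - i) * t^(k - i))) + diffs pc k * t^k =
        ((\<Sum>i\<le>k. zeta (real (2 * Suc i)) * pc (k - i)) + diffs pc k) * t^k" for k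
  proof -
    have "(\<Sum>i\<le>k. diffs lc i * t^i * (pc (k - i) * t^(k - i))) = (\<Sum>i\<le>k. zeta (real (2 * Suc i)) * pc (k - i) * t^k)"
    proof (intro sum.cong refl)
      fix i assume "i \<in> {..k}"
      hence "t^i * t^(k-i) = t^k" by (simp add: power_add[symmetric])
      thus "diffs lc i * t^i * (pc (k - i) * t^(k - i)) = zeta (real (2 * Suc i)) * pc (k - i) * t^k"
        by (simp only: diffs_lc) (metis (no_types, lifting) mult.assoc mult.left_commute)
    qed
    thus ?thesis by (simp only: sum_distrib_right[symmetric] distrib_right)
  qed
  with * show ?thesis by simp
qed

lemma Euler_rec: "(\<Sum>i\<le>k. zeta (real (2 * Suc i)) * pc (k - i)) = - diffs pc k"
proof -
  have "(\<lambda>k. (\<Sum>i\<le>k. zeta (real (2 * Suc i)) * pc (k - i)) + diffs pc k) k = 0"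
    by (rule powser_unique_zero[of 1]) (use Euler_aux in auto)
  thus ?thesis by simp
qed


lemma sum_atMost_rev: "(\<Sum>i\<le>k. f i) = (\<Sum>i\<le>k. f (k - i))"
  for f :: "nat \<Rightarrow> 'a::comm_monoid_add"
  by (rule sum.reindex_bij_witness[where i="\<lambda>i. k - i" and j="\<lambda>i. k - i"]) auto

definition s :: "nat \<Rightarrow> real" where "s j = (if j = 0 then -1/2 else zeta (real (2*j)))"

lemma E_rel: "(\<Sum>p\<le>N. pc p * s (N - p)) = (-1)^(N+1) * pi^(2*N) / (2 * fact (2*N))"
proof (cases N)
  case 0
  thus ?thesis by (simp add: pc_def s_def)
next
  case (Suc k)
  have "(\<Sum>p\<le>Suc k. pc p * s (Suc k - p)) = (\<Sum>p\<le>k. pc p * s (Suc k - p)) + pc (Suc k) * s 0"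
    by simp
  also have "(\<Sum>p\<le>k. pc p * s (Suc k - p)) = (\<Sum>p\<le>k. pc p * zeta (real (2 * Suc (k - p))))"
    by (intro sum.cong refl) (auto simp: s_def Suc_diff_le)
  also have "\<dots> = (\<Sum>i\<le>k. zeta (real (2 * Suc i)) * pc (k - i))"
    by (subst sum_atMost_rev) (intro sum.cong refl, auto simp: mult.commute)
  also have "\<dots> = - diffs pc k" by (rule Euler_rec)
  finally have "(\<Sum>p\<le>Suc k. pc p * s (Suc k - p)) = - (real (Suc k) * pc (Suc k)) - pc (Suc k) / 2"
    by (simp add: diffs_def s_def)
  also have "\<dots> = - (2 * real k + 3) / 2 * pc (Suc k)" by (simp add: field_simps)
  also have "\<dots> = (-1)^(Suc k + 1) * pi^(2 * Suc k) / (2 * fact (2 * Suc k))"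
  proof -
    have f: "fact (2 * Suc k + 1) = (2 * real k + 3) * (fact (2 * Suc k) :: real)"
      by (simp add: algebra_simps)
    define F where "F = (fact (2 * Suc k) :: real)"
    have Fp: "F > 0" by (simp add: F_def)
    have "- (2 * real k + 3) / 2 * pc (Suc k) = - (2 * real k + 3) / 2 * ((-1)^(Suc k) * pi^(2 * Suc k) / ((2 * real k + 3) * F))"
      unfolding pc_def f F_def ..
    also have "\<dots> = (- ((-1)^(Suc k))) * pi^(2 * Suc k) / (2 * F)"
    proof -
      have g: "\<And>\<sigma> P c (F::real). c > 0 \<Longrightarrow> F > 0 \<Longrightarrow> - c/2 * (\<sigma> * P / (c * F)) = (-\<sigma>) * P / (2*F)"
        by (simp add: field_simps)
      show ?thesis by (rule g) (use Fp in auto)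
    qed
    also have "(- ((-1)^(Suc k))) = ((-1)^(Suc k + 1) :: real)" by simp
    finally show ?thesis by (simp add: F_def del: power_Suc)
  qed
  finally show ?thesis using Suc by simp
qed


definition S :: "nat \<Rightarrow> real \<Rightarrow> real" where
  "S q x = (\<Sum>k\<le>q. (-1)^k * s (q - k) * x^(2*k+1) / fact (2*k+1)) + (-1)^q * pi * x^(2*q) / (2 * fact (2*q))"

definition S1 :: "nat \<Rightarrow> real \<Rightarrow> real" where
  "S1 q x = (\<Sum>k\<le>q. (-1)^k * s (q - k) * x^(2*k) / fact (2*k)) +
     (if q = 0 then 0 else (-1)^q * pi * x^(2*q-1) / (2 * fact (2*q-1)))"

lemma deriv_mono_term:
  "DERIV (\<lambda>x::real. c * x^(n+1) / fact (n+1)) x :> c * x^n / fact n"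
proof -
  have "DERIV (\<lambda>x::real. x^(Suc n)) x :> real (Suc n) * x^n"
    using DERIV_pow[of "Suc n" x] by simp
  hence "DERIV (\<lambda>x::real. c * x^(Suc n) / fact (Suc n)) x :> c * (real (Suc n) * x^n) / fact (Suc n)"
    by (intro DERIV_cdivide DERIV_cmult)
  also have "c * (real (Suc n) * x^n) / fact (Suc n) = c * x^n / fact n"
    by (simp add: field_simps del: of_nat_Suc)
  finally show ?thesis by simp
qed

lemma S_deriv: "DERIV (S q) x :> S1 q x"
proof -
  have d1: "DERIV (\<lambda>x. \<Sum>k\<le>q. (-1)^k * s (q - k) * x^(2*k+1) / fact (2*k+1)) x :>
          (\<Sum>k\<le>q. (-1)^k * s (q - k) * x^(2*k) / fact (2*k))"
    by (rule DERIV_sum) (rule deriv_mono_term)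
  have d2: "DERIV (\<lambda>x. (-1)^q * pi * x^(2*q) / (2 * fact (2*q))) x :>
           (if q = 0 then 0 else (-1)^q * pi * x^(2*q-1) / (2 * fact (2*q-1)))"
  proof (cases q)
    case 0 thus ?thesis by simp
  next
    case (Suc r)
    have "DERIV (\<lambda>x. ((-1)^q * pi / 2) * x^(2*r+1+1) / fact (2*r+1+1)) x :>
            ((-1)^q * pi / 2) * x^(2*r+1) / fact (2*r+1)"
      by (rule deriv_mono_term)
    thus ?thesis using Suc by (simp add: field_simps)
  qed
  show ?thesis unfolding S_def[abs_def] S1_def by (rule DERIV_add[OF d1 d2])
qed

lemma S1_Suc_alt:
  "S1 (Suc r) x = s (Suc r) + (\<Sum>j\<le>r. (-1)^(Suc j) * s (r - j) * x^(2*j+1+1) / fact (2*j+1+1))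
      + (-1)^(Suc r) * pi * x^(2*r+1) / (2 * fact (2*r+1))"
  unfolding S1_def by (subst sum.atMost_Suc_shift) simp

lemma S1_deriv: "DERIV (S1 (Suc r)) x :> - S r x"
proof -
  have d1: "DERIV (\<lambda>x. \<Sum>j\<le>r. (-1)^(Suc j) * s (r - j) * x^(2*j+1+1) / fact (2*j+1+1)) x :>
          (\<Sum>j\<le>r. (-1)^(Suc j) * s (r - j) * x^(2*j+1) / fact (2*j+1))"
    by (rule DERIV_sum) (rule deriv_mono_term)
  have d2: "DERIV (\<lambda>x. ((-1)^(Suc r) * pi / 2) * x^(2*r+1) / fact (2*r+1)) x :>
            ((-1)^(Suc r) * pi / 2) * x^(2*r) / fact (2*r)"
    by (rule deriv_mono_term)
  have "DERIV (\<lambda>x. s (Suc r) + (\<Sum>j\<le>r. (-1)^(Suc j) * s (r - j) * x^(2*j+1+1) / fact (2*j+1+1))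
      + ((-1)^(Suc r) * pi / 2) * x^(2*r+1) / fact (2*r+1)) x :>
      0 + (\<Sum>j\<le>r. (-1)^(Suc j) * s (r - j) * x^(2*j+1) / fact (2*j+1)) + ((-1)^(Suc r) * pi / 2) * x^(2*r) / fact (2*r)"
    by (intro DERIV_add d1 d2 DERIV_const)
  moreover have "(\<lambda>x. s (Suc r) + (\<Sum>j\<le>r. (-1)^(Suc j) * s (r - j) * x^(2*j+1+1) / fact (2*j+1+1))
      + ((-1)^(Suc r) * pi / 2) * x^(2*r+1) / fact (2*r+1)) = S1 (Suc r)"
    by (rule ext) (simp add: S1_Suc_alt field_simps)
  moreover have "0 + (\<Sum>j\<le>r. (-1)^(Suc j) * s (r - j) * x^(2*j+1) / fact (2*j+1)) + ((-1)^(Suc r) * pi / 2) * x^(2*r) / fact (2*r)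
      = - S r x"
  proof -
    have "(\<Sum>j\<le>r. (-1)^(Suc j) * s (r - j) * x^(2*j+1) / fact (2*j+1)) =
          - (\<Sum>j\<le>r. (-1)^j * s (r - j) * x^(2*j+1) / fact (2*j+1))"
      by (subst sum_negf[symmetric]) (intro sum.cong, auto)
    moreover have "((-1)^(Suc r) * pi / 2) * x^(2*r) / fact (2*r) = - ((-1)^r * pi * x^(2*r) / (2 * fact (2*r)))"
      by simp
    ultimately show ?thesis by (simp add: S_def)
  qed
  ultimately show ?thesis by simp
qed

lemma S_zero: "q \<ge> 1 \<Longrightarrow> S q 0 = 0"
  by (simp add: S_def)

lemma S1_zero: "q \<ge> 1 \<Longrightarrow> S1 q 0 = s q"
proof -
  assume q: "q \<ge> 1"
  have "(\<Sum>k\<le>q. (-1)^k * s (q - k) * (0::real)^(2*k) / fact (2*k)) = s q"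
    by (subst sum.atMost_shift) simp
  thus ?thesis using q by (simp add: S1_def)
qed

lemma S_zero_q: "S 0 x = pi / 2 - x / 2"
  by (simp add: S_def s_def)

lemma S_pi: "S q pi = 0"
proof -
  have "(\<Sum>k\<le>q. (-1)^k * s (q - k) * pi^(2*k+1) / fact (2*k+1)) = pi * (\<Sum>p\<le>q. pc p * s (q - p))"
    by (simp add: sum_distrib_left pc_def field_simps power_add power_mult)
  also have "\<dots> = pi * ((-1)^(q+1) * pi^(2*q) / (2 * fact (2*q)))" by (simp add: E_rel)
  finally show ?thesis by (simp add: S_def field_simps)
qed


lemma S_pos: "0 < x \<Longrightarrow> x < pi \<Longrightarrow> S q x > 0"
proof (induction q arbitrary: x)
  case 0
  thus ?case by (simp add: S_zero_q)
next
  case (Suc r)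
  show ?case
  proof (rule ccontr)
    assume neg: "\<not> S (Suc r) x > 0"
    obtain a where a: "0 < a" "a < x" "S (Suc r) x - S (Suc r) 0 = (x - 0) * S1 (Suc r) a"
      using MVT2[of 0 x "S (Suc r)" "S1 (Suc r)"] Suc.prems S_deriv by blast
    obtain b where b: "x < b" "b < pi" "S (Suc r) pi - S (Suc r) x = (pi - x) * S1 (Suc r) b"
      using MVT2[of x pi "S (Suc r)" "S1 (Suc r)"] Suc.prems S_deriv by blast
    have ha: "S1 (Suc r) a \<le> 0"
    proof -
      have "x * S1 (Suc r) a \<le> 0" using a(3) neg by (simp add: S_zero)
      thus ?thesis using Suc.prems by (simp add: mult_le_0_iff)
    qed
    have hb: "S1 (Suc r) b \<ge> 0"
    proof -
      have "(pi - x) * S1 (Suc r) b \<ge> 0" using b(3) neg by (simp add: S_pi)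
      thus ?thesis using Suc.prems by (simp add: zero_le_mult_iff)
    qed
    obtain c where c: "a < c" "c < b" "S1 (Suc r) b - S1 (Suc r) a = (b - a) * (- S r c)"
      using MVT2[of a b "S1 (Suc r)" "\<lambda>x. - S r x"] a b S1_deriv by (smt (verit))
    have "S r c > 0" using Suc.IH[of c] a b c Suc.prems by simp
    hence "(b - a) * (- S r c) < 0" using a b by (simp add: mult_pos_neg)
    thus False using c ha hb by simp
  qed
qed

lemma S_cont: "continuous_on A (S q)"
  by (intro continuous_at_imp_continuous_on ballI DERIV_isCont[OF S_deriv])

definition v :: "real \<Rightarrow> real" where "v x = x * (2 * pi - x)"
definition W :: "nat \<Rightarrow> real \<Rightarrow> real" where "W n x = (pi - x) * v x ^ (n - 1)"
definition W1 :: "nat \<Rightarrow> real \<Rightarrow> real" where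
  "W1 k x = 2 * real k * pi^2 * v x ^ (k - 1) - (2 * real k + 1) * v x ^ k"

lemma v_deriv: "DERIV v x :> 2 * (pi - x)"
  unfolding v_def[abs_def] by (auto intro!: derivative_eq_intros simp: algebra_simps)

lemma v_pow_deriv: "DERIV (\<lambda>x. v x ^ k) x :> real k * v x ^ (k - 1) * (2 * (pi - x))"
  using DERIV_power[OF v_deriv, of k] by (simp add: mult_ac)

lemma W_Suc_deriv: "DERIV (W (Suc k)) x :> W1 k x"
proof -
  have "DERIV (\<lambda>x. (pi - x) * v x ^ k) x :> (0 - 1) * v x ^ k + (pi - x) * (real k * v x ^ (k - 1) * (2 * (pi - x)))"
  proof -
    have d1: "DERIV (\<lambda>x. pi - x) x :> 0 - 1" by (intro DERIV_diff DERIV_const DERIV_ident)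
    show ?thesis using DERIV_mult'[OF d1 v_pow_deriv] by (simp add: algebra_simps)
  qed
  also have "(0 - 1) * v x ^ k + (pi - x) * (real k * v x ^ (k - 1) * (2 * (pi - x))) = W1 k x"
  proof (cases k)
    case 0 thus ?thesis by (simp add: W1_def)
  next
    case (Suc j)
    have sq: "(pi - x)^2 = pi^2 - v x" by (simp add: v_def power2_eq_square algebra_simps)
    have "(pi - x) * (real k * v x ^ (k - 1) * (2 * (pi - x))) = 2 * real k * (pi - x)^2 * v x ^ j"
      using Suc by (simp add: power2_eq_square algebra_simps)
    also have "\<dots> = 2 * real k * (pi^2 - v x) * v x ^ j" by (simp only: sq)
    also have "\<dots> = 2 * real k * pi^2 * v x ^ j - 2 * real k * v x ^ k"
      using Suc by (simp add: algebra_simps)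
    finally show ?thesis using Suc by (simp add: W1_def algebra_simps)
  qed
  finally show ?thesis by (simp add: W_def[abs_def])
qed

lemma W1_Suc_deriv:
  "DERIV (W1 (Suc j)) x :> 4 * real (Suc j) * real j * pi^2 * W j x - 2 * real (Suc j) * (2 * real j + 3) * W (Suc j) x"
proof -
  have "DERIV (W1 (Suc j)) x :> 2 * real (Suc j) * pi^2 * (real (Suc j - 1) * v x ^ (Suc j - 1 - 1) * (2 * (pi - x)))
          - (2 * real (Suc j) + 1) * (real (Suc j) * v x ^ (Suc j - 1) * (2 * (pi - x)))"
    unfolding W1_def[abs_def]
    by (intro DERIV_diff DERIV_cmult v_pow_deriv)
  also have "2 * real (Suc j) * pi^2 * (real (Suc j - 1) * v x ^ (Suc j - 1 - 1) * (2 * (pi - x)))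
          - (2 * real (Suc j) + 1) * (real (Suc j) * v x ^ (Suc j - 1) * (2 * (pi - x))) =
          2 * real (Suc j) * pi^2 * (real j * v x ^ (j - 1) * (2 * (pi - x)))
          - (2 * real (Suc j) + 1) * (real (Suc j) * v x ^ j * (2 * (pi - x)))" by simp
  also have "2 * real (Suc j) * pi^2 * (real j * v x ^ (j - 1) * (2 * (pi - x)))
          - (2 * real (Suc j) + 1) * (real (Suc j) * v x ^ j * (2 * (pi - x))) =
          4 * real (Suc j) * real j * pi^2 * W j x - 2 * real (Suc j) * (2 * real j + 3) * W (Suc j) x"
  proof (cases j)
    case 0 thus ?thesis by (simp add: W_def algebra_simps)
  next
    case (Suc i)
    thus ?thesis by (simp add: W_def algebra_simps)
  qed
  finally show ?thesis .
qed

lemma W_cont: "continuous_on A (W n)"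
  unfolding W_def[abs_def] v_def by (intro continuous_intros)

lemma W_pos: "0 < x \<Longrightarrow> x < pi \<Longrightarrow> W n x > 0"
  by (simp add: W_def v_def)

definition J :: "nat \<Rightarrow> nat \<Rightarrow> real" where
  "J n q = integral {0..pi} (\<lambda>x. W n x * S q x)"

lemma J_has_integral: "((\<lambda>x. W n x * S q x) has_integral J n q) {0..pi}"
  unfolding J_def
  by (intro integrable_integral integrable_continuous_real continuous_intros W_cont S_cont)

lemma J_pos: "n \<ge> 1 \<Longrightarrow> J n q > 0"
proof -
  have "integral {0..pi} (\<lambda>x. 0) < integral {0..pi} (\<lambda>x. W n x * S q x)"
  proof (rule integral_less_real)
    show "{0<..<pi} \<noteq> {}" using pi_gt_zero by (auto simp: not_le)
  qed (auto intro!: continuous_intros W_cont S_cont mult_pos_pos W_pos S_pos)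
  thus "J n q > 0" by (simp add: J_def)
qed


lemma ftc_pi:
  assumes "\<And>x. DERIV F x :> f x"
  shows "(f has_integral (F pi - F 0)) {0..pi}"
proof (rule fundamental_theorem_of_calculus)
  show "0 \<le> pi" using pi_gt_zero by linarith
  fix x :: real assume "x \<in> {0..pi}"
  show "(F has_vector_derivative f x) (at x within {0..pi})"
    using has_field_derivative_at_within[OF assms[of x]]
    by (simp add: has_real_derivative_iff_has_vector_derivative)
qed

lemma J_one: "J 1 q = pi * s (Suc q)"
proof -
  define G where "G x = - S (Suc q) x - (pi - x) * S1 (Suc q) x" for x
  have dG: "DERIV G x :> W 1 x * S q x" for x
  proof -
    have d1: "DERIV (\<lambda>x. pi - x) x :> 0 - 1" by (intro DERIV_diff DERIV_const DERIV_ident)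
    have "DERIV G x :> - S1 (Suc q) x - ((0 - 1) * S1 (Suc q) x + (- S q x) * (pi - x))"
      unfolding G_def[abs_def] by (intro DERIV_diff DERIV_minus DERIV_mult d1 S_deriv S1_deriv)
    thus ?thesis by (simp add: W_def algebra_simps)
  qed
  have "((\<lambda>x. W 1 x * S q x) has_integral (G pi - G 0)) {0..pi}"
    by (rule ftc_pi[OF dG])
  moreover have "G pi - G 0 = pi * s (Suc q)"
    by (simp add: G_def S_pi S_zero S1_zero)
  ultimately show ?thesis using J_has_integral[of 1 q] has_integral_unique by metis
qed

lemma J_rec:
  "J (Suc (Suc j)) q = 2 * real (Suc j) * (2 * real j + 3) * J (Suc j) (Suc q)
      - 4 * real (Suc j) * real j * pi^2 * J j (Suc q)"
proof -
  define c1 where "c1 = 4 * real (Suc j) * real j * pi^2"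
  define c2 where "c2 = 2 * real (Suc j) * (2 * real j + 3)"
  define G where "G x = W1 (Suc j) x * S (Suc q) x - W (Suc (Suc j)) x * S1 (Suc q) x" for x
  have dG: "DERIV G x :> (c1 * (W j x * S (Suc q) x) - c2 * (W (Suc j) x * S (Suc q) x))
                       + W (Suc (Suc j)) x * S q x" for x
  proof -
    have "DERIV G x :> ((c1 * W j x - c2 * W (Suc j) x) * S (Suc q) x + S1 (Suc q) x * W1 (Suc j) x)
                      - (W1 (Suc j) x * S1 (Suc q) x + (- S q x) * W (Suc (Suc j)) x)"
      unfolding G_def[abs_def] c1_def c2_def
      by (intro DERIV_diff DERIV_mult W1_Suc_deriv S_deriv S1_deriv W_Suc_deriv)
    thus ?thesis by (simp add: algebra_simps)
  qed
  have "((\<lambda>x. (c1 * (W j x * S (Suc q) x) - c2 * (W (Suc j) x * S (Suc q) x))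
                       + W (Suc (Suc j)) x * S q x) has_integral (G pi - G 0)) {0..pi}"
    by (rule ftc_pi[OF dG])
  moreover have "G pi - G 0 = 0"
    by (simp add: G_def S_pi S_zero W_def v_def)
  ultimately have h1: "((\<lambda>x. (c1 * (W j x * S (Suc q) x) - c2 * (W (Suc j) x * S (Suc q) x))
                       + W (Suc (Suc j)) x * S q x) has_integral 0) {0..pi}" by simp
  have h2: "((\<lambda>x. c1 * (W j x * S (Suc q) x) - c2 * (W (Suc j) x * S (Suc q) x)) has_integral
              (c1 * J j (Suc q) - c2 * J (Suc j) (Suc q))) {0..pi}"
    by (intro has_integral_diff has_integral_mult_right J_has_integral)
  have "((\<lambda>x. W (Suc (Suc j)) x * S q x) has_integral (0 - (c1 * J j (Suc q) - c2 * J (Suc j) (Suc q)))) {0..pi}"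
    using has_integral_diff[OF h1 h2] by simp
  hence "J (Suc (Suc j)) q = 0 - (c1 * J j (Suc q) - c2 * J (Suc j) (Suc q))"
    using J_has_integral has_integral_unique by metis
  thus ?thesis by (simp add: c1_def c2_def)
qed


definition E :: "nat \<Rightarrow> nat \<Rightarrow> real" where
  "E a b = (if 2 * b \<le> a then (-1)^b * 4^b * fact (2*a - 2*b + 1) / (fact (2*b+1) * fact (a - 2*b)) else 0)"

lemma E_rec0: "E (Suc (Suc a)) 0 = 2 * (2 * real a + 5) * E (Suc a) 0"
proof -
  define F where "F = (fact (2 * a + 3) :: real)"
  define G where "G = (fact (Suc a) :: real)"
  define u where "u = real a + 2"
  have pos: "F > 0" "G > 0" "u > 0" by (simp_all add: F_def G_def u_def)
  have f1: "fact (2 * Suc (Suc a) + 1) = (2 * real a + 5) * (2 * real a + 4) * F"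
    unfolding F_def by (simp add: algebra_simps eval_nat_numeral)
  have f2: "fact (Suc (Suc a)) = u * G"
    unfolding G_def u_def by (simp add: algebra_simps)
  have f3: "fact (2 * Suc a + 1) = F"
    unfolding F_def by (simp add: algebra_simps eval_nat_numeral)
  have "E (Suc (Suc a)) 0 = (2 * real a + 5) * (2 * real a + 4) * F / (u * G)"
    unfolding E_def by (simp add: f1[symmetric] f2[symmetric])
  also have "\<dots> = 2 * (2 * real a + 5) * (F / G)"
    using pos by (simp add: field_simps) (simp add: u_def algebra_simps)
  also have "F / G = E (Suc a) 0"
    unfolding E_def by (simp add: f3[symmetric] G_def)
  finally show ?thesis .
qed

lemma E_rec_Suc_aux:
  fixes B C :: nat
  shows "(-1::real)^(Suc B) * 4^(Suc B) * fact (2*B + 2*C + 5) / (fact (2*B+3) * fact (C+1)) =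
         2 * (4 * real B + 2 * real C + 7) * ((-1)^(Suc B) * 4^(Suc B) * fact (2*B + 2*C + 3) / (fact (2*B+3) * fact C))
         - 4 * ((-1)^B * 4^B * fact (2*B + 2*C + 3) / (fact (2*B+1) * fact (C+1)))"
proof -
  define F where "F = (fact (2*B + 2*C + 3) :: real)"
  define G where "G = (fact (2*B + 1) :: real)"
  define H where "H = (fact C :: real)"
  define P where "P = ((-1::real)^B * 4^B)"
  define u where "u = 2 * real B + 3"
  define w where "w = 2 * real B + 2"
  define z where "z = real C + 1"
  have pos: "F > 0" "G > 0" "H > 0" "u > 0" "w > 0" "z > 0"
    by (simp_all add: F_def G_def H_def u_def w_def z_def)
  have f1: "fact (2*B + 2*C + 5) = (2 * real B + 2 * real C + 5) * (2 * real B + 2 * real C + 4) * F"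
    unfolding F_def by (simp add: algebra_simps eval_nat_numeral)
  have f2: "fact (2*B + 3) = u * w * G"
    unfolding G_def u_def w_def by (simp add: algebra_simps eval_nat_numeral)
  have f3: "fact (C + 1) = z * H"
    unfolding H_def z_def by (simp add: algebra_simps)
  have p1: "(-1::real)^(Suc B) * 4^(Suc B) = - 4 * P" by (simp add: P_def)
  have "- 4 * P * ((2 * real B + 2 * real C + 5) * (2 * real B + 2 * real C + 4) * F) / (u * w * G * (z * H)) =
         2 * (4 * real B + 2 * real C + 7) * (- 4 * P * F / (u * w * G * H))
         - 4 * (P * F / (G * (z * H)))"
    using pos by (simp add: field_simps) (simp add: u_def w_def z_def algebra_simps)
  thus ?thesis unfolding f1 f2 f3 p1 F_def[symmetric] G_def[symmetric] H_def[symmetric] P_def[symmetric] .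
qed


lemma E_rec_Suc: "E (Suc (Suc a)) (Suc B) = 2 * (2 * real a + 5) * E (Suc a) (Suc B) - 4 * E a B"
proof (cases "2 * Suc B \<le> Suc a")
  case True
  define C where "C = a - 2 * B - 1"
  have a: "a = 2 * B + 1 + C" using True by (simp add: C_def)
  have k1: "2 * Suc B \<le> Suc (Suc a)" "2 * Suc B \<le> Suc a" "2 * B \<le> a" using a by simp_all
  have c1: "2 * Suc (Suc a) - 2 * Suc B + 1 = 2*B + 2*C + 5" "2 * Suc B + 1 = 2*B+3"
           "Suc (Suc a) - 2 * Suc B = C + 1" "2 * Suc a - 2 * Suc B + 1 = 2*B + 2*C + 3"
           "Suc a - 2 * Suc B = C" "2 * a - 2 * B + 1 = 2*B + 2*C + 3" "a - 2 * B = C + 1"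
    by (simp_all add: a)
  have e1: "E (Suc (Suc a)) (Suc B) = (-1)^(Suc B) * 4^(Suc B) * fact (2*B + 2*C + 5) / (fact (2*B+3) * fact (C+1))"
    unfolding E_def if_P[OF k1(1)] c1 ..
  have e2: "E (Suc a) (Suc B) = (-1)^(Suc B) * 4^(Suc B) * fact (2*B + 2*C + 3) / (fact (2*B+3) * fact C)"
    unfolding E_def if_P[OF k1(2)] c1 ..
  have e3: "E a B = (-1)^B * 4^B * fact (2*B + 2*C + 3) / (fact (2*B+1) * fact (C+1))"
    unfolding E_def if_P[OF k1(3)] c1 ..
  have e4: "2 * real a + 5 = 4 * real B + 2 * real C + 7" by (simp add: a)
  show ?thesis unfolding e1 e2 e3 e4 by (rule E_rec_Suc_aux)
next
  case False
  show ?thesis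
  proof (cases "a = 2 * B")
    case True
    thus ?thesis by (simp add: E_def)
  next
    case False
    with \<open>\<not> 2 * Suc B \<le> Suc a\<close> show ?thesis by (simp add: E_def)
  qed
qed


lemma E_zero: "a < 2 * b \<Longrightarrow> E a b = 0"
  by (simp add: E_def)

lemma E_00: "E 0 0 = 1" by (simp add: E_def)
lemma E_10: "E 1 0 = 6" by (simp add: E_def eval_nat_numeral)
lemma E_10': "E (Suc 0) 0 = 6" using E_10 by simp
lemma J_one': "J (Suc 0) q = pi * s (Suc q)" using J_one[of q] by simp

lemma E_sum_rec:
  "(\<Sum>b\<le>Suc (Suc a). E (Suc (Suc a)) b * X b) =
     2 * (2 * real a + 5) * (\<Sum>b\<le>Suc a. E (Suc a) b * X b) - 4 * (\<Sum>b\<le>a. E a b * X (Suc b))"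
proof -
  have "(\<Sum>b\<le>Suc (Suc a). E (Suc (Suc a)) b * X b) =
        E (Suc (Suc a)) 0 * X 0 + (\<Sum>b\<le>Suc a. E (Suc (Suc a)) (Suc b) * X (Suc b))"
    by (rule sum.atMost_Suc_shift)
  also have "\<dots> = 2 * (2 * real a + 5) * (E (Suc a) 0 * X 0 + (\<Sum>b\<le>Suc a. E (Suc a) (Suc b) * X (Suc b)))
                 - 4 * (\<Sum>b\<le>Suc a. E a b * X (Suc b))"
    by (simp add: E_rec0 E_rec_Suc algebra_simps sum_subtractf sum_distrib_left)
  also have "E (Suc a) 0 * X 0 + (\<Sum>b\<le>Suc a. E (Suc a) (Suc b) * X (Suc b)) = (\<Sum>b\<le>Suc (Suc a). E (Suc a) b * X b)"
    by (rule sum.atMost_Suc_shift[symmetric])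
  also have "(\<Sum>b\<le>Suc (Suc a). E (Suc a) b * X b) = (\<Sum>b\<le>Suc a. E (Suc a) b * X b)"
    by (simp add: E_zero)
  also have "(\<Sum>b\<le>Suc a. E a b * X (Suc b)) = (\<Sum>b\<le>a. E a b * X (Suc b))"
    by (simp add: E_zero)
  finally show ?thesis .
qed

lemma J_closed_aux:
  "(\<forall>q. J (Suc a) q = fact a * (\<Sum>b\<le>a. E a b * pi^(2*b+1) * s (q + a + 1 - b))) \<and>
   (\<forall>q. J (Suc (Suc a)) q = fact (Suc a) * (\<Sum>b\<le>Suc a. E (Suc a) b * pi^(2*b+1) * s (q + Suc a + 1 - b)))"
proof (induction a)
  case 0
  have "J 2 q = 6 * pi * s (Suc (Suc q))" for q
    using J_rec[of 0 q] by (simp add: J_one' numeral_2_eq_2)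
  thus ?case by (simp add: J_one' E_00 E_10' E_zero numeral_2_eq_2)
next
  case (Suc a)
  have IH1: "J (Suc (Suc a)) q = fact (Suc a) * (\<Sum>b\<le>Suc a. E (Suc a) b * pi^(2*b+1) * s (q + Suc a + 1 - b))" for q
    using Suc.IH by blast
  have IH2: "J (Suc a) q = fact a * (\<Sum>b\<le>a. E a b * pi^(2*b+1) * s (q + a + 1 - b))" for q
    using Suc.IH by blast
  have "J (Suc (Suc (Suc a))) q = fact (Suc (Suc a)) * (\<Sum>b\<le>Suc (Suc a). E (Suc (Suc a)) b * pi^(2*b+1) * s (q + Suc (Suc a) + 1 - b))" for q
  proof -
    define X where "X b = pi^(2*b+1) * s (Suc (Suc (Suc (q + a))) - b)" for b
    have A1: "(\<Sum>b\<le>Suc a. E (Suc a) b * pi^(2*b+1) * s (Suc q + Suc a + 1 - b)) = (\<Sum>b\<le>Suc a. E (Suc a) b * X b)"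
      by (intro sum.cong refl) (simp add: X_def)
    have A2: "pi^2 * (\<Sum>b\<le>a. E a b * pi^(2*b+1) * s (Suc q + a + 1 - b)) = (\<Sum>b\<le>a. E a b * X (Suc b))"
      unfolding sum_distrib_left
    proof (intro sum.cong refl)
      fix b assume "b \<in> {..a}"
      hence "Suc q + a + 1 - b = Suc (Suc (Suc (q + a))) - Suc b" by simp
      thus "pi^2 * (E a b * pi^(2*b+1) * s (Suc q + a + 1 - b)) = E a b * X (Suc b)"
        by (simp add: X_def power_add power2_eq_square mult_ac)
    qed
    have A3: "(\<Sum>b\<le>Suc (Suc a). E (Suc (Suc a)) b * pi^(2*b+1) * s (q + Suc (Suc a) + 1 - b)) =
              (\<Sum>b\<le>Suc (Suc a). E (Suc (Suc a)) b * X b)"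
      by (intro sum.cong refl) (simp add: X_def)
    have "J (Suc (Suc (Suc a))) q = 2 * real (Suc (Suc a)) * (2 * real (Suc a) + 3) * J (Suc (Suc a)) (Suc q)
          - 4 * real (Suc (Suc a)) * real (Suc a) * pi^2 * J (Suc a) (Suc q)"
      by (rule J_rec)
    also have "\<dots> = 2 * real (Suc (Suc a)) * (2 * real (Suc a) + 3) * (fact (Suc a) * (\<Sum>b\<le>Suc a. E (Suc a) b * X b))
          - 4 * real (Suc (Suc a)) * real (Suc a) * fact a * (\<Sum>b\<le>a. E a b * X (Suc b))"
      unfolding IH1 IH2 A1 A2[symmetric] by (simp add: mult_ac)
    also have "\<dots> = fact (Suc (Suc a)) * (2 * (2 * real a + 5) * (\<Sum>b\<le>Suc a. E (Suc a) b * X b) - 4 * (\<Sum>b\<le>a. E a b * X (Suc b)))"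
      by (simp add: algebra_simps)
    also have "\<dots> = fact (Suc (Suc a)) * (\<Sum>b\<le>Suc (Suc a). E (Suc (Suc a)) b * X b)"
      by (simp only: E_sum_rec)
    finally show ?thesis unfolding A3 .
  qed
  thus ?case using IH1 by blast
qed

lemma J_closed: "J (Suc a) q = fact a * (\<Sum>b\<le>a. E a b * pi^(2*b+1) * s (q + a + 1 - b))"
  using J_closed_aux by blast


definition ff :: "real \<Rightarrow> nat \<Rightarrow> real" where "ff x k = (\<Prod>i<k. x - real i)"

lemma ff_0 [simp]: "ff x 0 = 1" by (simp add: ff_def)

lemma ff_Suc: "ff x (Suc k) = ff x k * (x - real k)"
  by (simp add: ff_def)

lemma ff_Suc': "ff x (Suc k) = x * ff (x - 1) k"
  unfolding ff_def prod.lessThan_Suc_shift by (simp add: algebra_simps)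

lemma ff_add: "ff x (a + b) = ff x a * ff (x - real a) b"
  by (induction b) (simp_all add: ff_Suc algebra_simps)

lemma ff_nat: "ff (real n) k = fact k * real (n choose k)"
proof (induction k arbitrary: n)
  case 0 thus ?case by simp
next
  case (Suc k)
  show ?case
  proof (cases n)
    case 0 thus ?thesis by (simp add: ff_Suc')
  next
    case (Suc n')
    have "ff (real n) (Suc k) = real n * ff (real n') k" using Suc by (simp add: ff_Suc')
    also have "\<dots> = real n * (fact k * real (n' choose k))" by (simp add: Suc.IH)
    also have "\<dots> = fact (Suc k) * real (n choose Suc k)"
    proof -
      have "real (Suc n' * (n' choose k)) = real ((Suc n' choose Suc k) * Suc k)"
        by (simp only: Suc_times_binomial_eq)
      hence "real n * real (n' choose k) = real (n choose Suc k) * real (Suc k)"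
        using Suc by (simp only: of_nat_mult)
      thus ?thesis by (simp add: algebra_simps del: of_nat_Suc)
    qed
    finally show ?thesis .
  qed
qed


lemma ff_nat_zero: "n < k \<Longrightarrow> ff (real n) k = 0"
  by (simp add: ff_nat)

lemma ff_nat_fact: "k \<le> n \<Longrightarrow> ff (real n) k = fact n / fact (n - k)"
  by (simp add: ff_nat binomial_fact)

lemma ff_diff: "ff (x + 1) (Suc j) - ff x (Suc j) = real (Suc j) * ff x j"
proof -
  have "ff (x + 1) (Suc j) = (x + 1) * ff x j" by (simp add: ff_Suc')
  moreover have "ff x (Suc j) = ff x j * (x - real j)" by (simp add: ff_Suc)
  ultimately show ?thesis by (simp add: algebra_simps)
qed

lemma ff_double: "ff (2 * x + 1) (2 * j) = 4^j * ff x j * ff (x + 1/2) j"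
proof (induction j)
  case 0 thus ?case by simp
next
  case (Suc j)
  have "ff (2 * x + 1) (2 * Suc j) = ff (2 * x + 1) (Suc (Suc (2 * j)))" by simp
  also have "\<dots> = ff (2 * x + 1) (2 * j) * (2 * x + 1 - real (2 * j)) * (2 * x + 1 - real (Suc (2 * j)))"
    by (simp only: ff_Suc)
  also have "\<dots> = 4^j * ff x j * ff (x + 1/2) j * (2 * x + 1 - real (2 * j)) * (2 * x + 1 - real (Suc (2 * j)))"
    by (simp only: Suc.IH)
  also have "\<dots> = 4^(Suc j) * (ff x j * (x - real j)) * (ff (x + 1/2) j * (x + 1/2 - real j))"
    by (simp add: algebra_simps)
  also have "\<dots> = 4^(Suc j) * ff x (Suc j) * ff (x + 1/2) (Suc j)"
    by (simp only: ff_Suc)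
  finally show ?case .
qed

lemma fact_double: "fact (2 * r + 1) = 4^r * fact r * ff (real r + 1/2) r"
proof -
  have "fact (2 * r + 1) = ff (real (2 * r + 1)) (2 * r + 1)"
    using ff_nat_fact[of "2*r+1" "2*r+1"] by simp
  also have "\<dots> = ff (real (2 * r + 1)) (2 * r) * 1"
    by (simp add: ff_Suc[of _ "2 * r", simplified])
  also have "real (2 * r + 1) = 2 * real r + 1" by simp
  also have "ff (2 * real r + 1) (2 * r) = 4^r * ff (real r) r * ff (real r + 1/2) r"
    by (rule ff_double)
  also have "ff (real r) r = fact r" by (simp add: ff_nat_fact)
  finally show ?thesis by simp
qed


lemma alt_step:
  fixes g :: "nat \<Rightarrow> real"
  shows "(\<Sum>M\<le>Suc K. real (Suc K choose M) * (-1)^M * g M) =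
         - (\<Sum>M\<le>K. real (K choose M) * (-1)^M * (g (Suc M) - g M))"
proof -
  have "(\<Sum>M\<le>Suc K. real (Suc K choose M) * (-1)^M * g M) =
        g 0 + (\<Sum>M\<le>K. real (Suc K choose Suc M) * (-1)^(Suc M) * g (Suc M))"
    by (subst sum.atMost_Suc_shift) simp
  also have "(\<Sum>M\<le>K. real (Suc K choose Suc M) * (-1)^(Suc M) * g (Suc M)) =
             (\<Sum>M\<le>K. real (K choose M) * (-1)^(Suc M) * g (Suc M)) +
             (\<Sum>M\<le>K. real (K choose Suc M) * (-1)^(Suc M) * g (Suc M))"
    by (simp add: sum.distrib[symmetric] algebra_simps)
  also have "(\<Sum>M\<le>K. real (K choose Suc M) * (-1)^(Suc M) * g (Suc M)) =
             (\<Sum>M\<le>Suc K. real (K choose M) * (-1)^M * g M) - g 0"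
    using sum.atMost_Suc_shift[of "\<lambda>M. real (K choose M) * (-1)^M * g M" K] by simp
  also have "(\<Sum>M\<le>Suc K. real (K choose M) * (-1)^M * g M) = (\<Sum>M\<le>K. real (K choose M) * (-1)^M * g M)"
    by simp
  finally show ?thesis
    by (simp add: sum_subtractf algebra_simps sum_negf)
qed

lemma F_lemma:
  "(\<Sum>M\<le>K. real (K choose M) * (-1)^M * ff (real M + c) j) = (-1)^K * ff (real j) K * ff c (j - K)"
proof (induction K arbitrary: j)
  case 0 thus ?case by simp
next
  case (Suc K)
  have "(\<Sum>M\<le>Suc K. real (Suc K choose M) * (-1)^M * ff (real M + c) j) =
        - (\<Sum>M\<le>K. real (K choose M) * (-1)^M * (ff (real (Suc M) + c) j - ff (real M + c) j))"
    by (rule alt_step)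
  also have "\<dots> = (-1)^(Suc K) * ff (real j) (Suc K) * ff c (j - Suc K)"
  proof (cases j)
    case 0
    have "ff 0 (Suc K) = 0" by (simp add: ff_Suc')
    thus ?thesis using 0 by simp
  next
    case (Suc j')
    have "(\<Sum>M\<le>K. real (K choose M) * (-1)^M * (ff (real (Suc M) + c) j - ff (real M + c) j)) =
          (\<Sum>M\<le>K. real (Suc j') * (real (K choose M) * (-1)^M * ff (real M + c) j'))"
    proof (intro sum.cong refl)
      fix M
      have "ff (real (Suc M) + c) j - ff (real M + c) j = real (Suc j') * ff (real M + c) j'"
        using ff_diff[of "real M + c" j'] Suc by (simp add: add_ac)
      thus "real (K choose M) * (-1)^M * (ff (real (Suc M) + c) j - ff (real M + c) j) =
            real (Suc j') * (real (K choose M) * (-1)^M * ff (real M + c) j')" by simp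
    qed
    also have "\<dots> = real (Suc j') * ((-1)^K * ff (real j') K * ff c (j' - K))"
      by (simp add: sum_distrib_left[symmetric] Suc.IH)
    finally show ?thesis using Suc by (simp add: ff_Suc')
  qed
  finally show ?case .
qed

lemma KEY:
  assumes "j \<le> N"
  shows "(\<Sum>M\<le>N. real (N choose M) * (-1)^M * ff (2 * real M + 1) (2*j)) =
         (-1)^N * 4^j * ff (real N) j * ff (real j) (N - j) * ff (real j + 1/2) (2*j - N)"
proof -
  define h where "h M = real (N choose M) * (-1)^M * ff (real M) j * ff (real M + 1/2) j" for M
  have fd: "\<And>M. ff (2 * real M + 1) (2*j) = 4^j * ff (real M) j * ff (real M + 1/2) j"
    by (rule ff_double)
  have "(\<Sum>M\<le>N. real (N choose M) * (-1)^M * ff (2 * real M + 1) (2*j)) = (\<Sum>M\<le>N. 4^j * h M)"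
    unfolding fd h_def by (intro sum.cong refl) (simp add: mult_ac)
  also have "\<dots> = 4^j * (\<Sum>M\<le>N. h M)" by (simp add: sum_distrib_left)
  also have "(\<Sum>M\<le>N. h M) = (\<Sum>M\<in>{j..N}. h M)"
  proof (rule sum.mono_neutral_right)
    show "\<forall>M\<in>{..N} - {j..N}. h M = 0" by (auto simp: h_def ff_nat_zero)
  qed auto
  also have "\<dots> = (\<Sum>M'\<le>N - j. h (M' + j))"
  proof -
    have "(\<Sum>M\<in>{j..N}. h M) = (\<Sum>M\<in>{0 + j..(N - j) + j}. h M)" using assms by simp
    also have "\<dots> = (\<Sum>M'\<in>{0..N - j}. h (M' + j))" by (rule sum.shift_bounds_cl_nat_ivl)
    finally show ?thesis by (simp add: atLeast0AtMost)
  qed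
  also have "\<dots> = (\<Sum>M'\<le>N - j. ff (real N) j * (-1)^j * (real ((N - j) choose M') * (-1)^M' * ff (real M' + (real j + 1/2)) j))"
  proof (intro sum.cong refl)
    fix M' assume "M' \<in> {..N - j}"
    hence M': "M' + j \<le> N" using assms by simp
    have "real (N choose (M' + j)) * ff (real (M' + j)) j = ff (real N) j * real ((N - j) choose M')"
    proof -
      have "(N choose (M' + j)) * ((M' + j) choose j) = (N choose j) * ((N - j) choose (M' + j - j))"
        by (rule choose_mult) (use M' in auto)
      hence "real (N choose (M' + j)) * real ((M' + j) choose j) = real (N choose j) * real ((N - j) choose M')"
        by (metis add_diff_cancel_right' of_nat_mult)
      thus ?thesis by (simp only: ff_nat) (simp add: algebra_simps)
    qed
    thus "h (M' + j) = ff (real N) j * (-1)^j * (real ((N - j) choose M') * (-1)^M' * ff (real M' + (real j + 1/2)) j)"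
      unfolding h_def by (simp add: power_add algebra_simps)
  qed
  also have "\<dots> = ff (real N) j * (-1)^j * ((-1)^(N - j) * ff (real j) (N - j) * ff (real j + 1/2) (j - (N - j)))"
    by (simp add: sum_distrib_left[symmetric] F_lemma)
  also have "j - (N - j) = 2 * j - N" using assms by linarith
  finally have eq: "(\<Sum>M\<le>N. real (N choose M) * (-1)^M * ff (2 * real M + 1) (2*j)) =
     4 ^ j * (ff (real N) j * (- 1) ^ j * ((- 1) ^ (N - j) * ff (real j) (N - j) * ff (real j + 1 / 2) (2 * j - N)))" .
  have pm: "(-1::real)^j * (-1)^(N - j) = (-1)^N" using assms by (simp add: power_add[symmetric])
  show ?thesis unfolding eq using pm by (simp add: algebra_simps)
qed


definition Al :: "nat \<Rightarrow> nat \<Rightarrow> real" where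
  "Al m b = (-1)^b * ff (real (m - b)) (b+1) / (fact (2*b+3) * ff (real m + 3/2) (b+1))"

lemma alt_lin_zero:
  assumes "N \<ge> 2"
  shows "(\<Sum>M\<le>N. real (N choose M) * (-1)^M * (2 * real M + 1)) = 0"
proof -
  have "(\<Sum>M\<le>N. real (N choose M) * (-1)^M * ff (real M + 1/2) 1) = (-1)^N * ff (real 1) N * ff (1/2) (1 - N)"
    by (rule F_lemma)
  also have "ff (real 1) N = 0" using assms by (intro ff_nat_zero) simp
  finally have "(\<Sum>M\<le>N. real (N choose M) * (-1)^M * (real M + 1/2)) = 0"
    by (simp add: ff_def)
  hence "2 * (\<Sum>M\<le>N. real (N choose M) * (-1)^M * (real M + 1/2)) = 0" by simp
  thus ?thesis by (simp add: sum_distrib_left algebra_simps)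
qed

lemma cert_inner:
  assumes "M \<le> N"
  shows "(\<Sum>p\<le>M. real (N choose M) * fact (2*M+1) * pi^(2*(N-M)) * (pc p * s (M - p))) =
         (\<Sum>j\<le>N. real (N choose M) * (-1)^(M+j) * ff (2 * real M + 1) (2*j) * pi^(2*N - 2*j) * s j)"
proof -
  have "(\<Sum>p\<le>M. real (N choose M) * fact (2*M+1) * pi^(2*(N-M)) * (pc p * s (M - p))) =
        (\<Sum>j\<le>M. real (N choose M) * fact (2*M+1) * pi^(2*(N-M)) * (pc (M - j) * s (M - (M - j))))"
    by (rule sum_atMost_rev)
  also have "\<dots> = (\<Sum>j\<le>M. real (N choose M) * (-1)^(M+j) * ff (2 * real M + 1) (2*j) * pi^(2*N - 2*j) * s j)"
  proof (intro sum.cong refl)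
    fix j assume "j \<in> {..M}"
    hence j: "j \<le> M" by simp
    have ffe: "ff (2 * real M + 1) (2*j) = fact (2*M+1) / fact (2*(M-j)+1)"
    proof -
      have "ff (real (2*M+1)) (2*j) = fact (2*M+1) / fact (2*M+1 - 2*j)"
        by (rule ff_nat_fact) (use j in simp)
      also have "2*M+1 - 2*j = 2*(M-j)+1" using j by simp
      finally have e1: "ff (real (2*M+1)) (2*j) = fact (2*M+1) / fact (2*(M-j)+1)" .
      have "real (2*M+1) = 2 * real M + 1" by simp
      with e1 show ?thesis by metis
    qed
    have pw: "pi^(2*(N-M)) * pi^(2*(M-j)) = pi^(2*N - 2*j)"
    proof -
      have "2*(N-M) + 2*(M-j) = 2*N - 2*j" using j assms by simp
      thus ?thesis by (metis power_add)
    qed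
    have sg: "(-1::real)^(M-j) = (-1)^(M+j)"
    proof -
      have "M + j = (M - j) + 2*j" using j by simp
      hence "(-1::real)^(M+j) = (-1)^(M-j) * (-1)^(2*j)" by (metis power_add)
      thus ?thesis by simp
    qed
    show "real (N choose M) * fact (2*M+1) * pi^(2*(N-M)) * (pc (M - j) * s (M - (M - j))) =
          real (N choose M) * (-1)^(M+j) * ff (2 * real M + 1) (2*j) * pi^(2*N - 2*j) * s j"
      unfolding ffe pc_def using j pw[symmetric] sg by (simp add: field_simps)
  qed
  also have "\<dots> = (\<Sum>j\<le>N. real (N choose M) * (-1)^(M+j) * ff (2 * real M + 1) (2*j) * pi^(2*N - 2*j) * s j)"
  proof (rule sum.mono_neutral_left)
    show "\<forall>j\<in>{..N} - {..M}. real (N choose M) * (-1)^(M+j) * ff (2 * real M + 1) (2*j) * pi^(2*N - 2*j) * s j = 0"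
    proof
      fix j assume "j \<in> {..N} - {..M}"
      hence "2 * M + 1 < 2 * j" by auto
      hence z: "ff (real (2*M+1)) (2*j) = 0" by (rule ff_nat_zero)
      have "real (2*M+1) = 2 * real M + 1" by simp
      with z have "ff (2 * real M + 1) (2*j) = 0" by metis
      thus "real (N choose M) * (-1)^(M+j) * ff (2 * real M + 1) (2*j) * pi^(2*N - 2*j) * s j = 0" by simp
    qed
  qed (use assms in auto)
  finally show ?thesis .
qed


definition Kc :: "nat \<Rightarrow> nat \<Rightarrow> real" where
  "Kc N j = (-1)^j * ((-1)^N * 4^j * ff (real N) j * ff (real j) (N - j) * ff (real j + 1/2) (2*j - N))"

lemma Kc_top: "Kc N N = fact (2*N+1)"
proof -
  have k: "Kc N N = 4^N * ff (real N) N * ff (real N + 1/2) N"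
    by (simp add: Kc_def power_add[symmetric] mult_ac)
  have f: "ff (real N) N = fact N" by (simp add: ff_nat_fact)
  show ?thesis unfolding k f fact_double[of N] by (simp add: mult_ac)
qed

lemma Kc_val:
  assumes b: "b \<le> m"
  shows "Kc (m+1) (m-b) = - fact (2*(m+1)+1) * Al m b"
proof -
  have sg: "(-1::real)^(m-b) * (-1)^(m+1) = - ((-1)^b)"
  proof -
    have "(m - b) + (m + 1) = 2*(m-b) + b + 1" using b by simp
    hence "(-1::real)^(m-b) * (-1)^(m+1) = (-1)^(2*(m-b)) * (-1)^b * (-1)" by (metis power_add power_one_right)
    thus ?thesis by simp
  qed
  have n1: "m + 1 - (m - b) = b + 1" using b by simp
  have n1': "Suc m - (m - b) = Suc b" using b by simp
  define F where "F = ff (real (m - b)) (b+1)"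
  show ?thesis
  proof (cases "F = 0")
    case True
    thus ?thesis by (simp add: Kc_def Al_def n1 n1' F_def)
  next
    case False
    hence m: "b + 1 \<le> m - b" unfolding F_def using ff_nat_zero[of "m-b" "b+1"] by linarith
    define c where "c = m - 2*b - 1"
    have mc: "m = 2*b + 1 + c" using m by (simp add: c_def)
    have n2: "2*(m-b) - (m+1) = c" using mc by simp
    have i1: "ff (real m + 3/2) (b+1) * ff (real (m-b) + 1/2) c = ff (real m + 3/2) (m-b)"
    proof -
      have "ff (real m + 3/2) ((b+1) + c) = ff (real m + 3/2) (b+1) * ff (real m + 3/2 - real (b+1)) c"
        by (rule ff_add)
      moreover have "real m + 3/2 - real (b+1) = real (m-b) + 1/2" using b by simp
      moreover have "(b+1) + c = m - b" using mc by simp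
      ultimately show ?thesis by metis
    qed
    have i2: "fact (2*b+3) = 4^(b+1) * fact (b+1) * ff (real (b+1) + 1/2) (b+1)"
    proof -
      have "2*(b+1)+1 = 2*b+3" by simp
      thus ?thesis using fact_double[of "b+1"] by metis
    qed
    have i3: "ff (real m + 3/2) (m-b) * ff (real (b+1) + 1/2) (b+1) = ff (real m + 3/2) (m+1)"
    proof -
      have "ff (real m + 3/2) ((m-b) + (b+1)) = ff (real m + 3/2) (m-b) * ff (real m + 3/2 - real (m-b)) (b+1)"
        by (rule ff_add)
      moreover have "real m + 3/2 - real (m-b) = real (b+1) + 1/2" using b by simp
      moreover have "(m-b) + (b+1) = m + 1" using b by simp
      ultimately show ?thesis by metis
    qed
    have i4: "ff (real (m+1)) (m-b) * fact (b+1) = fact (m+1)"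
    proof -
      have "ff (real (m+1)) (m-b) = fact (m+1) / fact (m+1-(m-b))" by (rule ff_nat_fact) simp
      thus ?thesis using n1 by simp
    qed
    have i5: "fact (2*(m+1)+1) = 4^(m+1) * fact (m+1) * ff (real m + 3/2) (m+1)"
    proof -
      have "real (m+1) + 1/2 = real m + 3/2" by simp
      thus ?thesis using fact_double[of "m+1"] by metis
    qed
    have key: "4^(m-b) * ff (real (m+1)) (m-b) * ff (real (m-b) + 1/2) c * (fact (2*b+3) * ff (real m + 3/2) (b+1))
               = fact (2*(m+1)+1)"
    proof -
      have "4^(m-b) * ff (real (m+1)) (m-b) * ff (real (m-b) + 1/2) c * (fact (2*b+3) * ff (real m + 3/2) (b+1))
           = (4^(m-b) * 4^(b+1)) * (ff (real (m+1)) (m-b) * fact (b+1)) *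
             (ff (real m + 3/2) (b+1) * ff (real (m-b) + 1/2) c * ff (real (b+1) + 1/2) (b+1))"
        unfolding i2 by (simp add: mult_ac)
      also have "\<dots> = 4^(m+1) * fact (m+1) * ff (real m + 3/2) (m+1)"
        unfolding i1 i3 i4 using b by (simp add: power_add[symmetric] mult_ac)
      finally show ?thesis unfolding i5 .
    qed
    have pos: "fact (2*b+3) * ff (real m + 3/2) (b+1) \<noteq> 0"
    proof -
      have "ff (real m + 3/2) (b+1) > 0" unfolding ff_def
        by (intro prod_pos) (use b in auto)
      thus ?thesis by simp
    qed
    have "Kc (m+1) (m-b) = ((-1)^(m-b) * (-1)^(m+1)) * (4^(m-b) * ff (real (m+1)) (m-b) * F * ff (real (m-b) + 1/2) c)"
      unfolding Kc_def F_def n1 n2 by (simp add: mult_ac)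
    also have "\<dots> = - ((-1)^b) * F * (4^(m-b) * ff (real (m+1)) (m-b) * ff (real (m-b) + 1/2) c)"
      unfolding sg by (simp add: mult_ac)
    also have "\<dots> = - ((-1)^b) * F * (fact (2*(m+1)+1) / (fact (2*b+3) * ff (real m + 3/2) (b+1)))"
      using key pos by (simp add: field_simps)
    also have "\<dots> = - fact (2*(m+1)+1) * Al m b"
      by (simp add: Al_def F_def)
    finally show ?thesis .
  qed
qed


lemma C_identity:
  assumes m: "m \<ge> 1"
  shows "(\<Sum>b\<le>m. Al m b * pi^(2*b+2) * s (m - b)) = s (m+1)"
proof -
  define N where "N = m + 1"
  have N2: "N \<ge> 2" using m by (simp add: N_def)
  define R where "R M j = real (N choose M) * (-1)^(M+j) * ff (2 * real M + 1) (2*j) * pi^(2*N - 2*j) * s j" for M j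
  have "0 = (\<Sum>M\<le>N. real (N choose M) * fact (2*M+1) * pi^(2*(N-M)) *
              ((\<Sum>p\<le>M. pc p * s (M - p)) - (-1)^(M+1) * pi^(2*M) / (2 * fact (2*M))))"
    by (simp add: E_rel)
  also have "\<dots> = (\<Sum>M\<le>N. (\<Sum>p\<le>M. real (N choose M) * fact (2*M+1) * pi^(2*(N-M)) * (pc p * s (M - p))))
                 - (\<Sum>M\<le>N. real (N choose M) * fact (2*M+1) * pi^(2*(N-M)) * ((-1)^(M+1) * pi^(2*M) / (2 * fact (2*M))))"
    unfolding sum_subtractf[symmetric] by (intro sum.cong refl) (simp only: right_diff_distrib sum_distrib_left)
  also have "(\<Sum>M\<le>N. real (N choose M) * fact (2*M+1) * pi^(2*(N-M)) * ((-1)^(M+1) * pi^(2*M) / (2 * fact (2*M)))) =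
             (\<Sum>M\<le>N. (- (pi^(2*N)) / 2) * (real (N choose M) * (-1)^M * (2 * real M + 1)))"
  proof (intro sum.cong refl)
    fix M assume "M \<in> {..N}"
    hence "2*(N-M) + 2*M = 2*N" by simp
    hence "pi^(2*(N-M)) * pi^(2*M) = pi^(2*N)" by (metis power_add)
    moreover have "fact (2*M+1) / fact (2*M) = (2 * real M + 1 :: real)" by simp
    ultimately show "real (N choose M) * fact (2*M+1) * pi^(2*(N-M)) * ((-1)^(M+1) * pi^(2*M) / (2 * fact (2*M))) =
          (- (pi^(2*N)) / 2) * (real (N choose M) * (-1)^M * (2 * real M + 1))"
      by (simp add: field_simps)
  qed
  also have "\<dots> = 0" by (subst sum_distrib_left[symmetric]) (simp only: alt_lin_zero[OF N2] mult_zero_right)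
  also have "(\<Sum>M\<le>N. (\<Sum>p\<le>M. real (N choose M) * fact (2*M+1) * pi^(2*(N-M)) * (pc p * s (M - p)))) =
             (\<Sum>M\<le>N. \<Sum>j\<le>N. R M j)"
  proof (rule sum.cong[OF refl])
    fix M assume "M \<in> {..N}"
    thus "(\<Sum>p\<le>M. real (N choose M) * fact (2*M+1) * pi^(2*(N-M)) * (pc p * s (M - p))) = (\<Sum>j\<le>N. R M j)"
      unfolding R_def by (intro cert_inner) simp
  qed
  also have "\<dots> = (\<Sum>j\<le>N. \<Sum>M\<le>N. R M j)" by (rule sum.swap)
  also have "\<dots> = (\<Sum>j\<le>N. pi^(2*N - 2*j) * s j * Kc N j)"
  proof (intro sum.cong refl)
    fix j assume "j \<in> {..N}"
    hence j: "j \<le> N" by simp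
    have "(\<Sum>M\<le>N. R M j) = pi^(2*N - 2*j) * s j * (-1)^j * (\<Sum>M\<le>N. real (N choose M) * (-1)^M * ff (2 * real M + 1) (2*j))"
      by (simp add: R_def sum_distrib_left power_add mult_ac)
    also have "\<dots> = pi^(2*N - 2*j) * s j * Kc N j"
      unfolding KEY[OF j] Kc_def by (simp add: mult_ac)
    finally show "(\<Sum>M\<le>N. R M j) = pi^(2*N - 2*j) * s j * Kc N j" .
  qed
  also have "\<dots> = s N * fact (2*N+1) + (\<Sum>j\<le>m. pi^(2*N - 2*j) * s j * Kc N j)"
    by (simp add: N_def Kc_top)
  also have "(\<Sum>j\<le>m. pi^(2*N - 2*j) * s j * Kc N j) = (\<Sum>b\<le>m. pi^(2*N - 2*(m-b)) * s (m-b) * Kc N (m-b))"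
    by (rule sum_atMost_rev)
  also have "\<dots> = (\<Sum>b\<le>m. - fact (2*N+1) * (Al m b * pi^(2*b+2) * s (m - b)))"
  proof (intro sum.cong refl)
    fix b assume "b \<in> {..m}"
    hence b: "b \<le> m" by simp
    have "2*N - 2*(m-b) = 2*b+2" using b by (simp add: N_def)
    thus "pi^(2*N - 2*(m-b)) * s (m-b) * Kc N (m-b) = - fact (2*N+1) * (Al m b * pi^(2*b+2) * s (m - b))"
      using Kc_val[OF b] by (simp add: N_def mult_ac)
  qed
  also have "\<dots> = - fact (2*N+1) * (\<Sum>b\<le>m. Al m b * pi^(2*b+2) * s (m - b))"
    by (simp add: sum_distrib_left)
  finally have "0 = fact (2*N+1) * (s N - (\<Sum>b\<le>m. Al m b * pi^(2*b+2) * s (m - b)))"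
    by (simp add: algebra_simps)
  thus ?thesis by (simp add: N_def)
qed


definition kap :: "nat \<Rightarrow> real" where "kap a = 2 / (4^(a+2) * ff (real a + 5/2) (a+3))"

lemma ff_pos: "(\<And>i. i < k \<Longrightarrow> x - real i > 0) \<Longrightarrow> ff x k > 0"
  unfolding ff_def by (intro prod_pos) auto

lemma kap_pos: "kap a > 0"
proof -
  have "ff (real a + 5/2) (a+3) > 0" by (rule ff_pos) simp
  thus ?thesis by (simp add: kap_def)
qed

lemma tele:
  "kap a * E a b = Al (Suc a) b - Al a b"
proof (cases "2 * b \<le> a")
  case False
  have z1: "ff (real (Suc a - b)) (Suc b) = 0" by (rule ff_nat_zero) (use False in simp)
  have z2: "ff (real (a - b)) (Suc b) = 0" by (rule ff_nat_zero) (use False in simp)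
  show ?thesis using False by (simp add: E_def Al_def z1 z2)
next
  case True
  define c where "c = a - 2*b"
  have a: "a = 2*b + c" using True by (simp add: c_def)
  define y where "y = real a + 3/2"
  define Q where "Q = ff y b"
  define P where "P = ff (real (b + c)) b"
  define D where "D = (fact (2*b+1) :: real)"
  define sg where "sg = ((-1::real)^b)"
  define H where "H = ff (real (b+c) + 1/2) (b+c)"
  have yb: "y - real b > 0" unfolding y_def a by simp
  have Qp: "Q > 0" unfolding Q_def by (rule ff_pos) (simp add: y_def a)
  have Hp: "H > 0" unfolding H_def by (rule ff_pos) simp
  have Dp: "D > 0" by (simp add: D_def)
  have yp: "y + 1 > 0" by (simp add: y_def)
  have cfp: "fact c > (0::real)" by simp
  define Y1 where "Y1 = y + 1"
  define Y2 where "Y2 = y - real b"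
  have Y: "Y1 > 0" "Y2 > 0" using yp yb by (simp_all add: Y1_def Y2_def)
  have n1: "Suc a - b = b + c + 1" using a by simp
  have al1: "Al (Suc a) b = sg * ((real (b + c) + 1) * P) / ((4 * (real b + 3/2) * (real b + 1) * D) * (Y1 * Q))"
  proof -
    have f1: "ff (real (Suc a - b)) (b+1) = (real (b+c) + 1) * P"
      unfolding n1 P_def by (simp add: ff_Suc' del: of_nat_add)
    have f2: "ff (real (Suc a) + 3/2) (b+1) = Y1 * Q"
      unfolding Q_def Y1_def y_def by (simp add: ff_Suc' algebra_simps)
    have f3: "fact (2*b+3) = 4 * (real b + 3/2) * (real b + 1) * D"
      unfolding D_def by (simp add: eval_nat_numeral algebra_simps)
    show ?thesis unfolding Al_def f1 f2 f3 sg_def ..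
  qed
  have n2: "a - b = b + c" using a by simp
  have al2: "Al a b = sg * (real c * P) / ((4 * (real b + 3/2) * (real b + 1) * D) * (Q * Y2))"
  proof -
    have f1: "ff (real (a - b)) (b+1) = real c * P"
      unfolding n2 P_def by (simp add: ff_Suc)
    have f2: "ff (real a + 3/2) (b+1) = Q * Y2"
      unfolding Q_def Y2_def y_def by (simp add: ff_Suc)
    have f3: "fact (2*b+3) = 4 * (real b + 3/2) * (real b + 1) * D"
      unfolding D_def by (simp add: eval_nat_numeral algebra_simps)
    show ?thesis unfolding Al_def f1 f2 f3 sg_def ..
  qed
  have Pf: "P * fact c = fact (b + c)"
  proof -
    have "P = fact (b+c) / fact (b + c - b)" unfolding P_def by (rule ff_nat_fact) simp
    thus ?thesis by simp
  qed
  have ka: "kap a * E a b = sg * fact (b+c) / (4 * Y1 * Y2 * Q * D * fact c)"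
  proof -
    have e: "E a b = sg * 4^b * fact (2*(b+c)+1) / (D * fact c)"
    proof -
      have "2*a - 2*b + 1 = 2*(b+c)+1" "a - 2*b = c" using a by simp_all
      thus ?thesis using True unfolding E_def D_def sg_def by simp
    qed
    have fd: "fact (2*(b+c)+1) = 4^(b+c) * fact (b+c) * H"
      unfolding H_def by (rule fact_double)
    have ffk: "ff (real a + 5/2) (a+3) = Y1 * Q * Y2 * (H / 2)"
    proof -
      have "ff (real a + 5/2) ((b+2) + (b+c+1)) = ff (real a + 5/2) (b+2) * ff (real a + 5/2 - real (b+2)) (b+c+1)"
        by (rule ff_add)
      moreover have "(b+2) + (b+c+1) = a + 3" using a by simp
      moreover have "ff (real a + 5/2) (b+2) = Y1 * Q * Y2"
      proof -
        have s1: "ff (y+1) (Suc (Suc b)) = ff (y+1) (Suc b) * (y + 1 - real (Suc b))" by (rule ff_Suc)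
        have s2: "ff (y+1) (Suc b) = (y+1) * ff (y + 1 - 1) b" by (rule ff_Suc')
        have "real a + 5/2 = y + 1" by (simp add: y_def)
        hence "ff (real a + 5/2) (b+2) = ff (y+1) (Suc (Suc b))" by (metis add_2_eq_Suc')
        also have "\<dots> = (y+1) * ff y b * (y + 1 - real (Suc b))" using s1 s2 by simp
        also have "\<dots> = Y1 * Q * Y2" by (simp add: Q_def Y1_def Y2_def)
        finally show ?thesis .
      qed
      moreover have "ff (real a + 5/2 - real (b+2)) (b+c+1) = H / 2"
      proof -
        have "real a + 5/2 - real (b+2) = real (b+c) + 1/2" using a by simp
        moreover have "ff (real (b+c) + 1/2) (b+c+1) = H / 2"
          unfolding H_def by (simp add: ff_Suc)
        ultimately show ?thesis by metis
      qed
      ultimately show ?thesis by metis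
    qed
    have p4: "(4::real)^(a+2) = 4^b * 4^(b+c) * 16"
      using a by (simp add: power_add[symmetric] eval_nat_numeral)
    show ?thesis unfolding kap_def e fd ffk p4
      using Qp Hp Dp Y cfp by (simp add: field_simps)
  qed
  define Zv where "Zv = (real b + 3/2) * (real b + 1)"
  define R1 where "R1 = real (b+c) + 1"
  have Zp: "Zv > 0" by (simp add: Zv_def)
  have kid: "R1 * Y2 - real c * Y1 = Zv"
    by (simp add: R1_def Zv_def Y1_def Y2_def y_def a algebra_simps)
  have z4: "4 * (real b + 3/2) * (real b + 1) * D = 4 * Zv * D" by (simp add: Zv_def)
  have "sg * (R1 * P) / ((4 * Zv * D) * (Y1 * Q)) - sg * (real c * P) / ((4 * Zv * D) * (Q * Y2)) =
        sg * P * (R1 * Y2 - real c * Y1) / (4 * Zv * D * Y1 * Y2 * Q)"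
    using Qp Dp Y Zp by (simp add: field_simps)
  also have "\<dots> = sg * P / (4 * D * Y1 * Y2 * Q)"
    unfolding kid using Zp by simp
  also have "\<dots> = sg * fact (b+c) / (4 * Y1 * Y2 * Q * D * fact c)"
    unfolding Pf[symmetric] using cfp by (simp add: mult_ac)
  finally have "kap a * E a b = sg * (R1 * P) / ((4 * Zv * D) * (Y1 * Q)) - sg * (real c * P) / ((4 * Zv * D) * (Q * Y2))"
    unfolding ka ..
  thus ?thesis unfolding al1 al2 z4 R1_def .
qed


lemma Gamma_shift:
  assumes "x > 0"
  shows "Gamma (x + real k) = ff (x + real k - 1) k * Gamma x"
proof (induction k)
  case 0 thus ?case by simp
next
  case (Suc k)
  have nz: "x + real k \<notin> \<int>\<^sub>\<le>\<^sub>0" using assms by (auto dest: nonpos_Ints_nonpos)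
  have "Gamma (x + real (Suc k)) = Gamma ((x + real k) + 1)" by (simp add: add_ac)
  also have "\<dots> = (x + real k) * Gamma (x + real k)" by (rule Gamma_plus1[OF nz])
  also have "\<dots> = (x + real k) * (ff (x + real k - 1) k * Gamma x)" by (simp only: Suc.IH)
  also have "ff (x + real (Suc k) - 1) (Suc k) = (x + real k) * ff (x + real k - 1) k"
    by (simp add: ff_Suc' algebra_simps)
  ultimately show ?case by simp
qed

lemma Gamma_half: "Gamma (real a + 7/2) = ff (real a + 5/2) (a+3) * sqrt pi"
proof -
  have "Gamma (1/2 + real (a+3)) = ff (1/2 + real (a+3) - 1) (a+3) * Gamma (1/2)"
    by (rule Gamma_shift) simp
  moreover have "1/2 + real (a+3) = real a + 7/2" by simp
  moreover have "1/2 + real (a+3) - 1 = real a + 5/2" by simp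
  ultimately show ?thesis using Gamma_one_half_real by metis
qed

lemma Gamma_nat: "Gamma (real (Suc j)) = fact j"
  using Gamma_fact[of j] by (simp add: add.commute)

lemma field_aux:
  fixes sp sg pw F1 S P1 P2 FF F2 F3 :: real
  assumes "FF > 0" "sp > 0" "F2 > 0" "F3 > 0" "P1 > 0" "P2 > 0"
  shows "2 * sp * sg * pw * F1 * S / (P1 * (FF * sp) * F2 * F3) =
         2 / (P1 * P2 * FF) * (sg * P2 * F1 / (F2 * F3)) * pw * S"
  using assms by (simp add: field_simps)

lemma term_eq:
  assumes k1: "1 \<le> k" and k2: "2 * k \<le> n + 1" and km: "k \<le> m"
  shows "sqrt (4*pi) * (-1)^(k-1) * pi^(2*k) * Gamma (real (2*n-2*k+2)) * zeta (real (2*m+2-2*k))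
              / (4 powr (real n - real k + 2) * Gamma (real n + 5/2) * Gamma (real (2*k)) * Gamma (real n + 2 - real (2*k)))
         = kap (n-1) * E (n-1) (k-1) * pi^(2*k) * s (m+1-k)"
proof -
  obtain b where kb: "k = Suc b" using k1 by (cases k) auto
  obtain a where na: "n = Suc a" using k2 kb by (cases n) auto
  have ab: "2 * b \<le> a" using k2 kb na by simp
  have g1: "Gamma (real (2*n-2*k+2)) = fact (2*a-2*b+1)"
  proof -
    have "2*n-2*k+2 = Suc (2*a-2*b+1)" using ab na kb by simp
    thus ?thesis by (simp only: Gamma_nat)
  qed
  have g2: "Gamma (real (2*k)) = fact (2*b+1)"
  proof -
    have "2*k = Suc (2*b+1)" using kb by simp
    thus ?thesis by (simp only: Gamma_nat)
  qed
  have g3: "Gamma (real n + 2 - real (2*k)) = fact (a - 2*b)"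
  proof -
    have "real n + 2 - real (2*k) = real (Suc (a - 2*b))" using ab na kb by simp
    thus ?thesis by (simp only: Gamma_nat)
  qed
  have g4: "Gamma (real n + 5/2) = ff (real a + 5/2) (a+3) * sqrt pi"
  proof -
    have "real n + 5/2 = real a + 7/2" using na by simp
    thus ?thesis by (simp only: Gamma_half)
  qed
  have p: "4 powr (real n - real k + 2) = 4^(a-b+2)"
  proof -
    have "real n - real k + 2 = real (a-b+2)" using ab na kb by simp
    hence "4 powr (real n - real k + 2) = 4 powr (real (a-b+2))" by (simp only:)
    also have "\<dots> = 4^(a-b+2)" by (rule powr_realpow) simp
    finally show ?thesis .
  qed
  have z: "zeta (real (2*m+2-2*k)) = s (m+1-k)"
  proof -
    have "2*m+2-2*k = 2*(m+1-k)" by simp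
    moreover have "m+1-k \<noteq> 0" using km by simp
    ultimately show ?thesis by (simp add: s_def)
  qed
  have sq: "sqrt (4*pi) = 2 * sqrt pi" by (simp add: real_sqrt_mult)
  have e: "E a b = (-1)^b * 4^b * fact (2*a-2*b+1) / (fact (2*b+1) * fact (a-2*b))"
    using ab by (simp add: E_def)
  have ffp: "ff (real a + 5/2) (a+3) > 0" by (rule ff_pos) simp
  have p4: "(4::real)^(a+2) = 4^(a-b+2) * 4^b"
  proof -
    have "a+2 = (a-b+2) + b" using ab by simp
    thus ?thesis by (metis power_add)
  qed
  have spi: "sqrt pi > 0" by simp
  have i1: "k - 1 = b" "n - 1 = a" "m + 1 - k = m - b" using kb na by simp_all
  show ?thesis
    unfolding g1 g2 g3 g4 p z sq i1 kap_def e p4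
    by (rule field_aux) (use ffp spi in simp_all)
qed


lemma Al_zero: "Al 0 b = 0"
proof -
  have "ff (real 0) (b+1) = 0" by (rule ff_nat_zero) simp
  thus ?thesis by (simp add: Al_def)
qed

theorem mainTheorem4:
  fixes m :: nat
  assumes "m \<ge> 1"
  shows "zeta (real (2*m+2)) =
           (\<Sum>n=1..m. \<Sum>k=1..(n+1) div 2.
              sqrt (4*pi) * (-1)^(k-1) * pi^(2*k) * Gamma (real (2*n-2*k+2)) * zeta (real (2*m+2-2*k))
              / (4 powr (real n - real k + 2) * Gamma (real n + 5/2) * Gamma (real (2*k)) * Gamma (real n + 2 - real (2*k))))
         \<and> (\<forall>n\<in>{1..m}. (\<Sum>k=1..(n+1) div 2.
              sqrt (4*pi) * (-1)^(k-1) * pi^(2*k) * Gamma (real (2*n-2*k+2)) * zeta (real (2*m+2-2*k))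
              / (4 powr (real n - real k + 2) * Gamma (real n + 5/2) * Gamma (real (2*k)) * Gamma (real n + 2 - real (2*k)))) > 0)"
proof -
  define T where "T n k = sqrt (4*pi) * (-1)^(k-1) * pi^(2*k) * Gamma (real (2*n-2*k+2)) * zeta (real (2*m+2-2*k))
              / (4 powr (real n - real k + 2) * Gamma (real n + 5/2) * Gamma (real (2*k)) * Gamma (real n + 2 - real (2*k)))" for n k
  define X where "X b = pi^(2*b+2) * s (m - b)" for b
  have inner: "(\<Sum>k=1..(Suc a+1) div 2. T (Suc a) k) = kap a * (\<Sum>b\<le>a. E a b * X b)" if am: "a < m" for a
  proof -
    have d: "(Suc a + 1) div 2 = Suc (a div 2)" by simp
    have "(\<Sum>k=1..(Suc a+1) div 2. T (Suc a) k) = (\<Sum>k=Suc 0..Suc (a div 2). T (Suc a) k)"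
      unfolding d by simp
    also have "\<dots> = (\<Sum>b=0..a div 2. T (Suc a) (Suc b))"
      by (rule sum.shift_bounds_cl_Suc_ivl)
    also have "\<dots> = (\<Sum>b=0..a div 2. kap a * (E a b * X b))"
    proof (intro sum.cong refl)
      fix b assume "b \<in> {0..a div 2}"
      hence b: "2 * b \<le> a" by auto
      have "T (Suc a) (Suc b) = kap (Suc a - 1) * E (Suc a - 1) (Suc b - 1) * pi^(2*Suc b) * s (m+1-Suc b)"
        unfolding T_def by (rule term_eq) (use b am in auto)
      thus "T (Suc a) (Suc b) = kap a * (E a b * X b)"
        by (simp add: X_def mult_ac)
    qed
    also have "\<dots> = (\<Sum>b\<le>a. kap a * (E a b * X b))"
    proof (rule sum.mono_neutral_left)
      show "\<forall>b\<in>{..a} - {0..a div 2}. kap a * (E a b * X b) = 0"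
        by (auto simp: E_zero)
    qed auto
    finally show ?thesis by (simp add: sum_distrib_left)
  qed
  have pos: "(\<Sum>b\<le>a. E a b * X b) > 0" if am: "a < m" for a
  proof -
    have "J (Suc a) (m - Suc a) = fact a * (\<Sum>b\<le>a. E a b * pi^(2*b+1) * s (m - Suc a + a + 1 - b))"
      by (rule J_closed)
    also have "(\<Sum>b\<le>a. E a b * pi^(2*b+1) * s (m - Suc a + a + 1 - b)) = (\<Sum>b\<le>a. E a b * X b) / pi"
    proof -
      have "(\<Sum>b\<le>a. E a b * pi^(2*b+1) * s (m - Suc a + a + 1 - b)) = (\<Sum>b\<le>a. E a b * X b / pi)"
      proof (intro sum.cong refl)
        fix b assume "b \<in> {..a}"
        have "m - Suc a + a + 1 - b = m - b" using am by simp
        thus "E a b * pi^(2*b+1) * s (m - Suc a + a + 1 - b) = E a b * X b / pi"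
          by (simp add: X_def)
      qed
      thus ?thesis by (simp add: sum_divide_distrib)
    qed
    finally have "(\<Sum>b\<le>a. E a b * X b) = pi * J (Suc a) (m - Suc a) / fact a"
      by (simp add: field_simps)
    moreover have "J (Suc a) (m - Suc a) > 0" by (rule J_pos) simp
    ultimately show ?thesis by simp
  qed
  have P2: "\<forall>n\<in>{1..m}. (\<Sum>k=1..(n+1) div 2. T n k) > 0"
  proof
    fix n assume "n \<in> {1..m}"
    then obtain a where n: "n = Suc a" and am: "a < m" by (cases n) auto
    show "(\<Sum>k=1..(n+1) div 2. T n k) > 0"
      unfolding n inner[OF am] using kap_pos pos[OF am] by simp
  qed
  have "(\<Sum>n=1..m. \<Sum>k=1..(n+1) div 2. T n k) = (\<Sum>a<m. \<Sum>k=1..(Suc a+1) div 2. T (Suc a) k)"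
    by (simp add: sum.atLeast1_atMost_eq)
  also have "\<dots> = (\<Sum>a<m. \<Sum>b\<le>m. kap a * E a b * X b)"
  proof (rule sum.cong[OF refl])
    fix a assume "a \<in> {..<m}"
    hence am: "a < m" by simp
    have "(\<Sum>b\<le>a. kap a * E a b * X b) = (\<Sum>b\<le>m. kap a * E a b * X b)"
    proof (rule sum.mono_neutral_left)
      show "\<forall>b\<in>{..m} - {..a}. kap a * E a b * X b = 0" by (auto simp: E_zero)
    qed (use am in auto)
    thus "(\<Sum>k=1..(Suc a+1) div 2. T (Suc a) k) = (\<Sum>b\<le>m. kap a * E a b * X b)"
      unfolding inner[OF am] by (simp add: sum_distrib_left mult_ac)
  qed
  also have "\<dots> = (\<Sum>b\<le>m. \<Sum>a<m. kap a * E a b * X b)" by (rule sum.swap)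
  also have "\<dots> = (\<Sum>b\<le>m. Al m b * X b)"
  proof (rule sum.cong[OF refl])
    fix b
    have "(\<Sum>a<m. kap a * E a b * X b) = (\<Sum>a<m. Al (Suc a) b - Al a b) * X b"
      by (simp add: tele sum_distrib_right)
    also have "\<dots> = Al m b * X b" using sum_lessThan_telescope[of "\<lambda>a. Al a b" m] by (simp add: Al_zero)
    finally show "(\<Sum>a<m. kap a * E a b * X b) = Al m b * X b" .
  qed
  also have "\<dots> = s (m+1)"
    using C_identity[OF assms] by (simp add: X_def mult_ac)
  also have "\<dots> = zeta (real (2*m+2))" by (simp add: s_def)
  finally have P1: "zeta (real (2*m+2)) = (\<Sum>n=1..m. \<Sum>k=1..(n+1) div 2. T n k)" ..
  show ?thesis using P1 P2 unfolding T_def by blast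
qed


end
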